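(* Let $\mu > 1$ and let $H : (0,\infty) \to (0,\infty)$ be a measurable function such that $$\eta(t) = \inf_{(t/\mu,\, t\mu)} H > 0 \quad \text{for all } t \in (0,\infty)$$ and $$\int_1^\infty (\eta(t)\,t)^{-1/4}\,dt < \infty.$$ Then there exists an infinitely smooth function $h : (0,\infty) \to (0,\infty)$ such that: 1) $h(t) \le H(t)$ for all $t \in (0,\infty)$; 2) $h(t_2) \ge h(t_1)$ for all $t_2 \ge t_1 > 0$; 3) for every real $\alpha > 0$ there is a constant $\beta > 0$, depending only on $\alpha$ and $\mu$, such that $h(\alpha t) \le \beta h(t)$ for all $t \ge 2$; 4) $\int_1^\infty (h(t)\,t)^{-1/4}\,dt < \infty$. *)

theory Defs
  imports "HOL-Analysis.Analysis"
begin

definition smooth_on :: "real set \<Rightarrow> (real \<Rightarrow> real) \<Rightarrow> bool" where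
  "smooth_on S f \<longleftrightarrow> (\<forall>n. \<forall>x\<in>S. ((deriv ^^ n) f) differentiable (at x))"

definition eta :: "real \<Rightarrow> (real \<Rightarrow> real) \<Rightarrow> real \<Rightarrow> real" where
  "eta \<mu> H t = Inf (H ` {t/\<mu> <..< t*\<mu>})"

end

theory Submission
  imports Defs "HOL-Complex_Analysis.Complex_Analysis"
begin

definition psi :: "'a::real_normed_field \<Rightarrow> 'a" where "psi w = (w^2/(1+w^2))^3"

lemma psi_basic:
  fixes x :: real
  shows "0 \<le> psi x" "psi x \<le> 1" "psi x \<le> x^6"
proof -
  have a: "0 \<le> x^2/(1+x^2)" by simp
  have p: "0 < 1 + x^2" by (simp add: add_pos_nonneg)
  have b: "x^2/(1+x^2) \<le> 1" using p by (simp add: divide_le_eq)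
  have c: "x^2/(1+x^2) \<le> x^2" using p by (simp add: divide_le_eq algebra_simps)
  show "0 \<le> psi x" unfolding psi_def using a by simp
  show "psi x \<le> 1" unfolding psi_def using a b by (simp add: power_le_one)
  have "psi x \<le> (x^2)^3" unfolding psi_def using power_mono[OF c a, of 3] .
  then show "psi x \<le> x^6" by (simp add: power_mult[symmetric])
qed

lemma frac_mono: "0 \<le> (a::real) \<Longrightarrow> a \<le> b \<Longrightarrow> a/(1+a) \<le> b/(1+b)"
  by (simp add: divide_simps) (simp add: algebra_simps)

lemma psi_mono:
  fixes x y :: real
  assumes "0 \<le> x" "x \<le> y" shows "psi x \<le> psi y"
proof -
  have "x^2 \<le> y^2" using assms by (simp add: power_mono)
  then have "x^2/(1+x^2) \<le> y^2/(1+y^2)" by (intro frac_mono) auto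
  then show ?thesis unfolding psi_def by (intro power_mono) auto
qed

lemma psi_ge:
  fixes x :: real assumes "1 \<le> x" shows "1/8 \<le> psi x"
proof -
  have "1 \<le> x^2" using assms by (simp add: one_le_power)
  then have "1/2 \<le> x^2/(1+x^2)" by (simp add: divide_simps)
  then have "(1/2)^3 \<le> (x^2/(1+x^2))^3" by (intro power_mono) auto
  then show ?thesis unfolding psi_def by (simp add: power_divide)
qed

lemma psi_scale:
  fixes a x :: real assumes "1 \<le> a" "0 \<le> x" shows "psi (a*x) \<le> a^6 * psi x"
proof -
  have "(a*x)^2/(1+(a*x)^2) \<le> a^2 * (x^2/(1+x^2))"
  proof -
    have "(a*x)^2/(1+(a*x)^2) = a^2 * (x^2/(1+(a*x)^2))" by (simp add: power_mult_distrib)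
    also have "\<dots> \<le> a^2 * (x^2/(1+x^2))"
    proof (intro mult_left_mono divide_left_mono)
      have "x^2 \<le> (a*x)^2" using assms by (simp add: power_mult_distrib mult_le_cancel_right1 one_le_power)
      then show "1 + x\<^sup>2 \<le> 1 + (a * x)\<^sup>2" by simp
    qed (auto intro!: add_pos_nonneg mult_pos_pos)
    finally show ?thesis .
  qed
  then have cube: "psi (a*x) \<le> (a^2 * (x^2/(1+x^2)))^3" unfolding psi_def by (intro power_mono) auto
  have eq: "(a^2 * (x^2/(1+x^2)))^3 = a^6 * psi x"
    unfolding psi_def by (simp only: power_mult_distrib power_mult[symmetric]) simp
  show ?thesis using order_trans[OF cube eq[THEN eq_refl]] .
qed

lemma psi_norm:
  fixes w :: "'a::real_normed_field"
  assumes "norm w \<le> 1/2" shows "norm (psi w) \<le> 3 * norm w ^ 6"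
proof -
  have n2: "norm (w^2) = norm w ^2" by (simp add: norm_power)
  have "norm w ^ 2 \<le> 1/4" using assms power_mono[OF assms, of 2] by (simp add: power2_eq_square)
  have "1 - norm w^2 \<le> norm (1 + w^2)"
    using norm_triangle_ineq2[of 1 "- (w^2)"] n2 by (simp add: norm_minus_cancel)
  then have d: "3/4 \<le> norm (1 + w^2)" using \<open>norm w ^ 2 \<le> 1/4\<close> by linarith
  have "norm (w^2/(1+w^2)) = norm w^2 / norm (1+w^2)" by (simp add: norm_divide n2)
  also have "\<dots> \<le> norm w^2 / (3/4)" using d by (intro divide_left_mono) auto
  finally have e: "norm (w^2/(1+w^2)) \<le> (4/3) * norm w^2" by simp
  have "norm (psi w) = norm (w^2/(1+w^2)) ^ 3" unfolding psi_def by (simp add: norm_power)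
  also have "\<dots> \<le> ((4/3) * norm w^2)^3" using e by (intro power_mono) auto
  also have "\<dots> = (64/27) * norm w ^ 6" by (simp add: power_mult_distrib power_mult[symmetric] power_divide)
  also have "\<dots> \<le> 3 * norm w ^ 6" by (intro mult_right_mono) auto
  finally show ?thesis .
qed

lemma geom_partial: "0 \<le> (r::real) \<Longrightarrow> r < 1 \<Longrightarrow> (\<Sum>m<n. r^m) \<le> 1/(1-r)"
  by (simp add: sum_gp_strict divide_right_mono)

lemma term_le_suminf_real: "summable (f::nat\<Rightarrow>real) \<Longrightarrow> (\<And>n. 0 \<le> f n) \<Longrightarrow> f i \<le> suminf f"
  using sum_le_suminf[of f "{i}"] by auto

lemma term_le_suminf_ennreal: "(f::nat\<Rightarrow>ennreal) i \<le> suminf f"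
  using sum_le_suminf[of f "{i}"] by auto

definition ad :: "nat \<Rightarrow> nat \<Rightarrow> nat" where "ad k j = (if k \<le> j then j - k else k - j)"

lemma geom_two_sided:
  fixes r :: real assumes "0 \<le> r" "r < 1"
  shows "(\<Sum>k<N. r ^ ad k j) \<le> 2/(1-r)"
proof -
  define S1 where "S1 = {k. k < N \<and> k \<le> j}"
  define S2 where "S2 = {k. k < N \<and> j < k}"
  have U: "{..<N} = S1 \<union> S2" "S1 \<inter> S2 = {}" "finite S1" "finite S2" by (auto simp: S1_def S2_def)
  have "(\<Sum>k\<in>S1. r ^ ad k j) = (\<Sum>k\<in>S1. r ^ (j-k))" by (intro sum.cong) (auto simp: S1_def ad_def)
  also have "\<dots> = (\<Sum>m\<in>(\<lambda>k. j-k)`S1. r^m)"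
    by (subst sum.reindex) (auto simp: inj_on_def S1_def)
  also have "\<dots> \<le> (\<Sum>m<Suc j. r^m)"
    by (intro sum_mono2) (auto simp: S1_def assms)
  also have "\<dots> \<le> 1/(1-r)" by (rule geom_partial[OF assms])
  finally have A: "(\<Sum>k\<in>S1. r ^ ad k j) \<le> 1/(1-r)" .
  have "(\<Sum>k\<in>S2. r ^ ad k j) = (\<Sum>k\<in>S2. r ^ (k-j))" by (intro sum.cong) (auto simp: S2_def ad_def)
  also have "\<dots> = (\<Sum>m\<in>(\<lambda>k. k-j)`S2. r^m)"
    by (subst sum.reindex) (auto simp: inj_on_def S2_def)
  also have "\<dots> \<le> (\<Sum>m<N. r^m)"
    by (intro sum_mono2) (auto simp: S2_def assms)
  also have "\<dots> \<le> 1/(1-r)" by (rule geom_partial[OF assms])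
  finally have B: "(\<Sum>k\<in>S2. r ^ ad k j) \<le> 1/(1-r)" .
  have "(\<Sum>k<N. r ^ ad k j) = (\<Sum>k\<in>S1. r ^ ad k j) + (\<Sum>k\<in>S2. r ^ ad k j)"
    unfolding U(1) by (rule sum.union_disjoint[OF U(3,4,2)])
  also have "\<dots> \<le> 2/(1-r)" using A B by simp
  finally show ?thesis .
qed

lemma holo_series:
  fixes f :: "nat \<Rightarrow> complex \<Rightarrow> complex"
  assumes S: "open S" and hol: "\<And>n. f n holomorphic_on S"
    and bnd: "\<And>x. x \<in> S \<Longrightarrow> \<exists>d>0. cball x d \<subseteq> S \<and>
              (\<exists>M. summable M \<and> (\<forall>\<^sub>F n in sequentially. \<forall>z\<in>cball x d. norm (f n z) \<le> M n))"
  shows "(\<lambda>z. \<Sum>n. f n z) holomorphic_on S"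
proof (rule holomorphic_uniform_sequence[OF S, where f = "\<lambda>n z. \<Sum>i<n. f i z"])
  show "\<And>n. (\<lambda>z. \<Sum>i<n. f i z) holomorphic_on S" by (intro holomorphic_on_sum hol)
  fix x assume "x \<in> S"
  then obtain d M where "d > 0" "cball x d \<subseteq> S" "summable M"
    "\<forall>\<^sub>F n in sequentially. \<forall>z\<in>cball x d. norm (f n z) \<le> M n" using bnd by blast
  then show "\<exists>d>0. cball x d \<subseteq> S \<and> uniform_limit (cball x d) (\<lambda>n z. \<Sum>i<n. f i z) (\<lambda>z. \<Sum>n. f n z) sequentially"
    using Weierstrass_m_test_ev by blast
qed

lemma block_extract:
  fixes f :: "real \<Rightarrow> real" and \<nu> :: real
  assumes nu: "\<nu> > 1" and int: "set_integrable lborel {1..} f" and nn: "\<And>t. t \<ge> 1 \<Longrightarrow> f t \<ge> 0"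
  shows "\<exists>tk B. summable B \<and> (\<forall>k. 0 \<le> B k) \<and>
           (\<forall>k. \<nu>^k \<le> tk k \<and> tk k \<le> \<nu>^(Suc k) \<and> f (tk k) \<le> B k / \<nu>^k)"
proof -
  define W where "W k = {\<nu>^k..<\<nu>^Suc k}" for k
  have W1: "1 \<le> x" if "x \<in> W k" for x k
  proof -
    have "1 \<le> \<nu>^k" using nu by (simp add: one_le_power)
    then show ?thesis using that by (auto simp: W_def)
  qed
  have disj: "disjoint_family W"
  proof (auto simp: disjoint_family_on_def)
    fix k l x assume "k \<noteq> l" "x \<in> W k" "x \<in> W l"
    then have "\<nu>^l < \<nu>^Suc k" "\<nu>^k < \<nu>^Suc l" by (auto simp: W_def)
    then have "l < Suc k" "k < Suc l" using power_less_imp_less_exp[OF nu] by blast+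
    with \<open>k \<noteq> l\<close> show False by simp
  qed
  define f' where "f' x = indicator {1..} x *\<^sub>R f x" for x
  have intf': "integrable lborel f'" using int unfolding set_integrable_def f'_def .
  have mf': "f' \<in> borel_measurable lborel" using intf' by auto
  have fin: "(\<integral>\<^sup>+ x. ennreal (norm (f' x)) \<partial>lborel) < \<infinity>"
    using intf' integrable_iff_bounded by blast
  define I where "I k = (\<integral>\<^sup>+ x. ennreal (f' x) * indicator (W k) x \<partial>lborel)" for k
  have meas: "(\<lambda>x. ennreal (f' x) * indicator (W k) x) \<in> borel_measurable lborel" for k
    using mf' by (simp add: W_def)
  have "(\<Sum>k. I k) = (\<integral>\<^sup>+ x. (\<Sum>k. ennreal (f' x) * indicator (W k) x) \<partial>lborel)"
    unfolding I_def by (rule nn_integral_suminf[symmetric]) (rule meas)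
  also have "\<dots> = (\<integral>\<^sup>+ x. ennreal (f' x) * indicator (\<Union>(range W)) x \<partial>lborel)"
    by (simp add: ennreal_suminf_cmult suminf_indicator[OF disj])
  also have "\<dots> \<le> (\<integral>\<^sup>+ x. ennreal (norm (f' x)) \<partial>lborel)"
    by (intro nn_integral_mono) (auto simp: indicator_def intro: ennreal_leI)
  finally have sumfin: "(\<Sum>k. I k) < \<infinity>" using fin by simp
  have Ifin: "I k \<noteq> top" for k
    using term_le_suminf_ennreal[of I k] sumfin by (auto simp: top_unique)
  define a where "a k = enn2real (I k)" for k
  have Ia: "I k = ennreal (a k)" for k using Ifin[of k] by (simp add: a_def ennreal_enn2real_if)
  have a0: "0 \<le> a k" for k by (simp add: a_def)
  have suma: "summable a"
    apply (rule summable_suminf_not_top[OF a0])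
    using sumfin by (simp add: Ia[symmetric])
  define B where "B k = (a k + (1/\<nu>)^k)/(\<nu>-1)" for k
  have sumB: "summable B" unfolding B_def
    using nu by (intro summable_divide summable_add suma summable_geometric) auto
  have B0: "0 \<le> B k" for k using nu a0[of k] by (simp add: B_def)
  have "\<exists>t. \<nu>^k \<le> t \<and> t \<le> \<nu>^(Suc k) \<and> f t \<le> B k / \<nu>^k" for k
  proof (rule ccontr)
    assume "\<not> ?thesis"
    then have less: "B k / \<nu>^k < f t" if "t \<in> W k" for t using that unfolding W_def by (metis atLeastLessThan_iff less_eq_real_def not_less)
    have len: "\<nu>^k \<le> \<nu>^Suc k" using nu by simp
    have "(\<integral>\<^sup>+ x. ennreal (B k / \<nu>^k) * indicator (W k) x \<partial>lborel) \<le> I k"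
      unfolding I_def
    proof (intro nn_integral_mono)
      fix x
      show "ennreal (B k / \<nu>^k) * indicator (W k) x \<le> ennreal (f' x) * indicator (W k) x"
      proof (cases "x \<in> W k")
        case True
        then have "f' x = f x" using W1[OF True] by (simp add: f'_def)
        then show ?thesis using True less[OF True] by (simp add: ennreal_leI)
      qed simp
    qed
    moreover have "(\<integral>\<^sup>+ x. ennreal (B k / \<nu>^k) * indicator (W k) x \<partial>lborel) = ennreal (B k / \<nu>^k) * emeasure lborel (W k)"
      by (rule nn_integral_cmult_indicator) (simp add: W_def)
    moreover have "emeasure lborel (W k) = ennreal (\<nu>^Suc k - \<nu>^k)"
      unfolding W_def using len by (rule emeasure_lborel_Ico)
    moreover have "B k / \<nu>^k * (\<nu>^Suc k - \<nu>^k) = a k + (1/\<nu>)^k"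
      using nu by (simp add: B_def field_simps)
    ultimately have "ennreal (a k + (1/\<nu>)^k) \<le> ennreal (a k)"
      using nu B0[of k] len by (simp add: Ia ennreal_mult''[symmetric] ennreal_mult[symmetric])
    then have "a k + (1/\<nu>)^k \<le> a k" using a0[of k] by (simp add: ennreal_le_iff)
    moreover have "0 < (1/\<nu>)^k" using nu by simp
    ultimately show False by simp
  qed
  then obtain tk where "\<forall>k. \<nu>^k \<le> tk k \<and> tk k \<le> \<nu>^(Suc k) \<and> f (tk k) \<le> B k / \<nu>^k"
    by metis
  then show ?thesis using sumB B0 by blast
qed

lemma kernel_bound:
  fixes \<sigma> s b :: real
  assumes s: "\<sigma> > 1" "0 \<le> s" "s * \<sigma>^(3*i) \<le> b"
  shows "s * (if j \<le> i then \<sigma>^(i-j) else (1/\<sigma>)^(4*(j-i))) * \<sigma>^(3*j) \<le> b * (1/\<sigma>)^(ad j i)"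
proof (cases "j \<le> i")
  case True
  then obtain d where i: "i = j + d" using le_Suc_ex by blast
  have "s * \<sigma>^d * \<sigma>^(3*j) * \<sigma>^d \<le> s * \<sigma>^d * \<sigma>^(3*j) * \<sigma>^(2*d)"
    using s by (intro mult_left_mono power_increasing) auto
  also have "\<dots> = s * \<sigma>^(3*i)"
  proof -
    have "\<sigma>^d * \<sigma>^(2*d) = \<sigma>^(3*d)" by (simp flip: power_add)
    then show ?thesis by (simp add: i power_add algebra_simps)
  qed
  also have "\<dots> \<le> b" by fact
  finally have "s * \<sigma>^d * \<sigma>^(3*j) \<le> b / \<sigma>^d" using s by (simp add: field_simps)
  then show ?thesis using True by (simp add: i ad_def power_one_over)
next
  case False
  then obtain d where j: "j = i + d" using le_Suc_ex nat_le_linear by blast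
  have "s * (1/\<sigma>)^(4*d) * \<sigma>^(3*j) * \<sigma>^d = s * \<sigma>^(3*i)"
  proof -
    have "\<sigma>^d * \<sigma>^(3*d) = \<sigma>^(4*d)" by (simp flip: power_add)
    then have "(1/\<sigma>)^(4*d) * \<sigma>^(3*d) * \<sigma>^d = 1" using s(1)
      by (simp add: power_one_over field_simps)
    then show ?thesis by (simp add: j power_add algebra_simps)
  qed
  also have "\<dots> \<le> b" by fact
  finally have "s * (1/\<sigma>)^(4*d) * \<sigma>^(3*j) \<le> b / \<sigma>^d" using s by (simp add: field_simps)
  then show ?thesis using False by (simp add: j ad_def power_one_over)
qed

lemma build_e:
  fixes \<sigma> :: real and L B :: "nat \<Rightarrow> real"
  assumes sig: "\<sigma> > 1" and Lpos: "\<And>i. L i > 0" and sB: "summable B" and B0: "\<And>i. B i \<ge> 0"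
    and LB: "\<And>i. L i powr (-1/4) * \<sigma>^(3*i) \<le> B i"
  shows "\<exists>e. (\<forall>k. e k > 0) \<and> (\<forall>k j. k \<le> j \<longrightarrow> e k \<le> L j * (1/\<sigma>)^(4*(j-k))) \<and>
             (\<forall>k j. j < k \<longrightarrow> e k \<le> L j * \<sigma>^(16*(k-j))) \<and>
             summable (\<lambda>j. e j powr (-1/4) * \<sigma>^(3*j))"
proof -
  define s where "s i = L i powr (-1/4)" for i
  have s0: "s i > 0" for i using Lpos[of i] by (simp add: s_def)
  define w where "w i k = (if k \<le> i then \<sigma>^(i-k) else (1/\<sigma>)^(4*(k-i)))" for i k
  have w0: "w i k > 0" for i k using sig by (simp add: w_def)
  define q where "q i k = s i * w i k" for i k
  have q0: "q i k > 0" for i k using s0 w0 by (simp add: q_def)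
  have qB: "q i k \<le> B i" for i k
  proof -
    have "w i k \<le> \<sigma>^(3*i)"
    proof (cases "k \<le> i")
      case True
      then show ?thesis using sig by (simp add: w_def power_increasing)
    next
      case False
      have "(1/\<sigma>)^(4*(k-i)) \<le> 1" using sig by (simp add: power_le_one)
      also have "1 \<le> \<sigma>^(3*i)" using sig by (simp add: one_le_power)
      finally show ?thesis using False by (simp add: w_def)
    qed
    then have "q i k \<le> s i * \<sigma>^(3*i)" unfolding q_def using s0[of i] by (intro mult_left_mono) auto
    also have "\<dots> \<le> B i" using LB[of i] by (simp add: s_def)
    finally show ?thesis .
  qed
  have sq: "summable (\<lambda>i. q i k)" for k
    by (rule summable_comparison_test'[OF sB]) (use q0 qB in \<open>auto simp: less_imp_le\<close>)
  define E where "E k = (\<Sum>i. q i k)" for k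
  have Eq: "q j k \<le> E k" for j k
    unfolding E_def by (rule term_le_suminf_real[OF sq]) (simp add: q0 less_imp_le)
  have E0: "E k > 0" for k using Eq[of k k] q0[of k k] by simp
  define e where "e k = E k powr (-4)" for k
  have e0: "e k > 0" for k using E0[of k] by (simp add: e_def)
  have ebound: "e k \<le> L j * inverse (w j k ^ 4)" for k j
  proof -
    have "e k \<le> q j k powr (-4)" unfolding e_def
      by (rule powr_mono2') (use Eq[of j k] q0[of j k] in auto)
    also have "\<dots> = s j powr (-4) * w j k powr (-4)"
      unfolding q_def by (rule powr_mult)
    also have "s j powr (-4) = L j"
    proof -
      have "s j powr (-4) = L j powr ((-1/4) * (-4))" unfolding s_def by (rule powr_powr)
      also have "\<dots> = L j" using Lpos[of j] by simp
      finally show ?thesis .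
    qed
    also have "w j k powr (-4) = inverse (w j k ^ 4)"
    proof -
      have "w j k powr (-4) = inverse (w j k powr (real 4))" by (subst powr_minus) simp
      also have "\<dots> = inverse (w j k ^ 4)" using w0[of j k] by (subst powr_realpow) auto
      finally show ?thesis .
    qed
    finally show ?thesis .
  qed
  have b1: "e k \<le> L j * (1/\<sigma>)^(4*(j-k))" if "k \<le> j" for k j
  proof -
    have "inverse ((\<sigma>^(j-k))^4) = (1/\<sigma>)^(4*(j-k))"
      by (simp add: power_one_over inverse_eq_divide flip: power_mult) (simp add: mult.commute)
    then show ?thesis using ebound[of k j] that by (simp add: w_def)
  qed
  have b2: "e k \<le> L j * \<sigma>^(16*(k-j))" if "j < k" for k j
  proof -
    have "inverse (((1/\<sigma>)^(4*(k-j)))^4) = \<sigma>^(16*(k-j))"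
      by (simp add: power_mult[symmetric] power_one_over mult.commute)
    then show ?thesis using ebound[of k j] that by (simp add: w_def)
  qed
  have eE: "e j powr (-1/4) = E j" for j
    using E0[of j] by (simp add: e_def powr_powr)
  define r where "r = 1/\<sigma>"
  have r: "0 \<le> r" "r < 1" using sig by (auto simp: r_def)
  define X where "X = (\<Sum>i. B i) * (2/(1-r))"
  have kb: "q i j * \<sigma>^(3*j) \<le> B i * r^(ad j i)" for i j
    unfolding q_def w_def r_def
    by (rule kernel_bound[OF sig less_imp_le[OF s0]]) (use LB in \<open>simp add: s_def\<close>)
  have "summable (\<lambda>j. E j * \<sigma>^(3*j))"
  proof (rule summableI_nonneg_bounded)
    show "0 \<le> E j * \<sigma>^(3*j)" for j using E0[of j] sig by simp
    fix N
    have "(\<Sum>j<N. E j * \<sigma>^(3*j)) = (\<Sum>j<N. \<Sum>i. q i j * \<sigma>^(3*j))"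
      unfolding E_def by (intro sum.cong refl) (rule suminf_mult2[OF sq])
    also have "\<dots> = (\<Sum>i. \<Sum>j<N. q i j * \<sigma>^(3*j))"
      by (rule suminf_sum[symmetric]) (intro summable_mult2 sq)
    also have "\<dots> \<le> (\<Sum>i. B i * (2/(1-r)))"
    proof (rule suminf_le)
      show "summable (\<lambda>i. \<Sum>j<N. q i j * \<sigma>^(3*j))" by (intro summable_sum summable_mult2 sq)
      show "summable (\<lambda>i. B i * (2/(1-r)))" by (intro summable_mult2 sB)
      fix i
      have "(\<Sum>j<N. q i j * \<sigma>^(3*j)) \<le> (\<Sum>j<N. B i * r^(ad j i))"
        by (intro sum_mono kb)
      also have "\<dots> = B i * (\<Sum>j<N. r^(ad j i))" by (simp add: sum_distrib_left)
      also have "\<dots> \<le> B i * (2/(1-r))"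
        by (intro mult_left_mono geom_two_sided r B0)
      finally show "(\<Sum>j<N. q i j * \<sigma>^(3*j)) \<le> B i * (2/(1-r))" .
    qed
    also have "\<dots> = X" unfolding X_def by (intro suminf_mult2[symmetric] sB)
    finally show "(\<Sum>j<N. E j * \<sigma>^(3*j)) \<le> X" .
  qed
  then have "summable (\<lambda>j. e j powr (-1/4) * \<sigma>^(3*j))" by (simp only: eE)
  then show ?thesis using e0 b1 b2 by blast
qed

lemma one_plus_sq_nz: "0 < Re (z::complex) \<Longrightarrow> 1 + z^2 \<noteq> 0"
proof
  assume "0 < Re z" "1 + z^2 = 0"
  then have "z^2 = -1" by (simp add: add_eq_0_iff)
  then have "Im (z^2) = 0" "Re (z^2) = -1" by simp_all
  then have "Im z = 0" using \<open>0 < Re z\<close> by (simp add: Im_power2)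
  then show False using \<open>Re (z^2) = -1\<close> by (simp add: Re_power2) (smt (verit) zero_le_power2)
qed

definition Pterm :: "real \<Rightarrow> (nat \<Rightarrow> real) \<Rightarrow> nat \<Rightarrow> 'a::real_normed_field \<Rightarrow> 'a" where
  "Pterm \<nu> e k w = of_real (e k) * psi (w / of_real (\<nu>^k))"

locale Pctx =
  fixes \<nu> :: real and e :: "nat \<Rightarrow> real" and C :: real
  assumes nu: "\<nu> > 1" and e0: "\<And>k. e k > 0" and eC: "\<And>k. e k \<le> C * \<nu>^(4*k)"
begin

lemma Pterm_bound:
  fixes w :: "'a::real_normed_field"
  assumes "norm w \<le> R" "2*R \<le> \<nu>^k"
  shows "norm (Pterm \<nu> e k w) \<le> 3 * R^6 * C * (1/\<nu>^2)^k"
proof -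
  have nk: "\<nu>^k > 0" using nu by simp
  have n1: "norm (w / of_real (\<nu>^k)) = norm w / \<nu>^k" using nk nu by (simp add: norm_divide norm_power)
  have "norm w / \<nu>^k \<le> R / \<nu>^k" using assms nk by (simp add: divide_right_mono)
  also have "\<dots> \<le> 1/2" using assms nk by (simp add: field_simps)
  finally have h: "norm (w / of_real (\<nu>^k)) \<le> 1/2" using n1 by simp
  have "norm (Pterm \<nu> e k w) = e k * norm (psi (w / of_real (\<nu>^k)))"
    using e0[of k] by (simp add: Pterm_def norm_mult)
  also have "\<dots> \<le> e k * (3 * (norm w / \<nu>^k)^6)"
    using psi_norm[OF h] e0[of k] n1 by (intro mult_left_mono) auto
  also have "\<dots> \<le> (C * \<nu>^(4*k)) * (3 * (R / \<nu>^k)^6)"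
    using eC[of k] assms nk e0[of k]
    by (intro mult_mono mult_left_mono power_mono divide_right_mono) auto
  also have "\<dots> = 3 * R^6 * C * (1/\<nu>^2)^k"
  proof -
    have "(\<nu>^k)^6 = \<nu>^(4*k) * (\<nu>^2)^k" by (simp flip: power_mult power_add) (simp add: mult.commute)
    then show ?thesis using nk by (simp add: power_divide power_one_over field_simps)
  qed
  finally show ?thesis .
qed

lemma Pterm_ev:
  "\<exists>N. \<forall>k\<ge>N. \<forall>w::'a::real_normed_field. norm w \<le> R \<longrightarrow> norm (Pterm \<nu> e k w) \<le> 3 * R^6 * C * (1/\<nu>^2)^k"
proof -
  obtain N where N: "2*R < \<nu>^N" using real_arch_pow[OF nu] by blast
  have "2*R \<le> \<nu>^k" if "k \<ge> N" for k
  proof -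
    have "\<nu>^N \<le> \<nu>^k" by (rule power_increasing[OF that]) (use nu in simp)
    then show ?thesis using N by linarith
  qed
  then show ?thesis using Pterm_bound by blast
qed

lemma summable_geo_nu: "summable (\<lambda>k. c * (1/\<nu>^2)^k)"
  using nu by (intro summable_mult summable_geometric) (auto simp: power_one_over)

lemma Pterm_summable: "summable (\<lambda>k. Pterm \<nu> e k (w::'a::{real_normed_field,banach}))"
proof -
  obtain N where N: "\<forall>k\<ge>N. \<forall>v::'a. norm v \<le> norm w \<longrightarrow> norm (Pterm \<nu> e k v) \<le> 3 * (norm w)^6 * C * (1/\<nu>^2)^k"
    using Pterm_ev[of "norm w"] by blast
  then have "\<forall>k\<ge>N. norm (Pterm \<nu> e k w) \<le> 3 * (norm w)^6 * C * (1/\<nu>^2)^k" by blast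
  then have ev: "\<forall>\<^sub>F k in sequentially. norm (Pterm \<nu> e k w) \<le> 3 * (norm w)^6 * C * (1/\<nu>^2)^k"
    unfolding eventually_sequentially by blast
  show ?thesis by (rule summable_comparison_test_ev[OF ev summable_geo_nu])
qed

definition Pc :: "complex \<Rightarrow> complex" where "Pc z = (\<Sum>k. Pterm \<nu> e k z)"
definition PR :: "real \<Rightarrow> real" where "PR t = (\<Sum>k. Pterm \<nu> e k t)"

lemma Pc_holo: "Pc holomorphic_on {z. 0 < Re z}"
proof -
  have op: "open {z::complex. 0 < Re z}" by (simp add: open_halfspace_Re_gt)
  have hol: "(\<lambda>z. Pterm \<nu> e k z) holomorphic_on {z. 0 < Re z}" for k
  proof -
    have "1 + (z / of_real (\<nu>^k))^2 \<noteq> 0" if "0 < Re z" for z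
      using that nu by (intro one_plus_sq_nz) simp
    then show ?thesis unfolding Pterm_def psi_def using nu by (auto intro!: holomorphic_intros)
  qed
  show ?thesis unfolding Pc_def
  proof (rule holo_series[OF op hol])
    fix x :: complex assume x: "x \<in> {z. 0 < Re z}"
    define d where "d = Re x / 2"
    have d: "d > 0" using x by (simp add: d_def)
    have sub: "cball x d \<subseteq> {z. 0 < Re z}"
    proof
      fix z assume "z \<in> cball x d"
      then have "norm (x - z) \<le> d" by (simp add: dist_norm)
      then have "Re x - Re z \<le> d" using abs_Re_le_cmod[of "x - z"] by simp
      then show "z \<in> {z. 0 < Re z}" using d by (simp add: d_def)
    qed
    define R where "R = norm x + d"
    have nR: "norm z \<le> R" if "z \<in> cball x d" for z
      using that norm_triangle_ineq2[of z x] by (auto simp: R_def dist_norm norm_minus_commute)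
    obtain N where N: "\<forall>k\<ge>N. \<forall>w::complex. norm w \<le> R \<longrightarrow> norm (Pterm \<nu> e k w) \<le> 3 * R^6 * C * (1/\<nu>^2)^k"
      using Pterm_ev by blast
    show "\<exists>d>0. cball x d \<subseteq> {z. 0 < Re z} \<and>
          (\<exists>M. summable M \<and> (\<forall>\<^sub>F n in sequentially. \<forall>z\<in>cball x d. norm (Pterm \<nu> e n z) \<le> M n))"
    proof -
      have "summable (\<lambda>k. 3*R^6*C*(1/\<nu>^2)^k)" by (rule summable_geo_nu)
      moreover have "\<forall>\<^sub>F n in sequentially. \<forall>z\<in>cball x d. norm (Pterm \<nu> e n z) \<le> 3*R^6*C*(1/\<nu>^2)^n"
        unfolding eventually_at_top_linorder using N nR by blast
      ultimately show ?thesis using d sub by blast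
    qed
  qed
qed

lemma Pc_real: "Pc (of_real t) = of_real (PR t)"
proof -
  have "(\<lambda>k. Pterm \<nu> e k (complex_of_real t)) = (\<lambda>k. of_real (Pterm \<nu> e k t))"
    by (rule ext) (simp add: Pterm_def psi_def)
  then show ?thesis unfolding Pc_def PR_def
    by (simp add: suminf_of_real[OF Pterm_summable[of t]])
qed

lemma Pterm_real: "Pterm \<nu> e k (t::real) = e k * psi (t / \<nu>^k)"
  by (simp add: Pterm_def)

lemma Pterm_nonneg: "0 \<le> Pterm \<nu> e k (t::real)"
  using e0[of k] psi_basic(1) by (simp add: Pterm_real)

lemma PR_nonneg: "0 \<le> PR t"
  unfolding PR_def by (intro suminf_nonneg Pterm_summable Pterm_nonneg)

lemma PR_mono: "0 \<le> t1 \<Longrightarrow> t1 \<le> t2 \<Longrightarrow> PR t1 \<le> PR t2"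
  unfolding PR_def
proof (intro suminf_le Pterm_summable)
  fix k assume "0 \<le> t1" "t1 \<le> t2"
  then have "psi (t1 / \<nu>^k) \<le> psi (t2 / \<nu>^k)" using nu by (intro psi_mono divide_right_mono) auto
  then show "Pterm \<nu> e k t1 \<le> Pterm \<nu> e k t2" using e0[of k] by (simp add: Pterm_real)
qed

lemma PR_scale: "1 \<le> a \<Longrightarrow> 0 \<le> t \<Longrightarrow> PR (a*t) \<le> a^6 * PR t"
  unfolding PR_def
proof -
  assume a: "1 \<le> a" "0 \<le> t"
  have "(\<Sum>k. Pterm \<nu> e k (a*t)) \<le> (\<Sum>k. a^6 * Pterm \<nu> e k t)"
  proof (intro suminf_le Pterm_summable summable_mult)
    fix k
    have "psi (a * (t / \<nu>^k)) \<le> a^6 * psi (t / \<nu>^k)" using a nu by (intro psi_scale) auto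
    then show "Pterm \<nu> e k (a*t) \<le> a^6 * Pterm \<nu> e k t"
      using e0[of k] by (simp add: Pterm_real mult_left_mono algebra_simps)
  qed
  also have "\<dots> = a^6 * (\<Sum>k. Pterm \<nu> e k t)" by (rule suminf_mult[OF Pterm_summable])
  finally show "(\<Sum>k. Pterm \<nu> e k (a*t)) \<le> a^6 * (\<Sum>k. Pterm \<nu> e k t)" .
qed

lemma PR_lower: "\<nu>^j \<le> t \<Longrightarrow> e j / 8 \<le> PR t"
proof -
  assume t: "\<nu>^j \<le> t"
  have "1/8 \<le> psi (t / \<nu>^j)" using t nu by (intro psi_ge) (simp add: field_simps)
  then have "e j / 8 \<le> Pterm \<nu> e j t" using e0[of j] by (simp add: Pterm_real)
  also have "\<dots> \<le> PR t" unfolding PR_def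
    by (intro term_le_suminf_real Pterm_summable Pterm_nonneg)
  finally show ?thesis .
qed

lemma PR_upper:
  assumes t: "0 \<le> t" "t \<le> \<nu>^Suc j"
    and b1: "\<And>k. k \<le> j \<Longrightarrow> e k \<le> Lj * (1/\<nu>)^(j-k)"
    and b2: "\<And>k. j < k \<Longrightarrow> e k \<le> Lj * \<nu>^(4*(k-j))"
  shows "PR t \<le> Lj * \<nu>^6 * (2/(1-1/\<nu>))"
proof -
  have Lj: "0 \<le> Lj" using b1[of j] e0[of j] by simp
  have tb: "Pterm \<nu> e k t \<le> Lj * \<nu>^6 * (1/\<nu>)^(ad k j)" for k
  proof (cases "k \<le> j")
    case True
    have "Pterm \<nu> e k t \<le> e k" using e0[of k] psi_basic(2)[of "t/\<nu>^k"]
      by (simp add: Pterm_real mult_left_le)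
    also have "\<dots> \<le> Lj * (1/\<nu>)^(j-k)" using b1[OF True] .
    also have "\<dots> \<le> Lj * \<nu>^6 * (1/\<nu>)^(j-k)"
      using Lj nu by (simp add: mult_le_cancel_left1 mult_right_mono one_le_power)
    finally show ?thesis using True by (simp add: ad_def)
  next
    case False
    then obtain d where k: "k = Suc j + d" using le_Suc_ex not_le_imp_less Suc_le_eq by metis
    have nk: "0 < \<nu>^k" using nu by simp
    have "Pterm \<nu> e k t \<le> e k * (t / \<nu>^k)^6"
      using e0[of k] psi_basic(3)[of "t/\<nu>^k"] by (simp add: Pterm_real)
    also have "\<dots> \<le> (Lj * \<nu>^(4*(k-j))) * (\<nu>^Suc j / \<nu>^k)^6"
      using b2[of k] False t nk e0[of k] by (intro mult_mono power_mono divide_right_mono) auto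
    also have "\<dots> = Lj * \<nu>^4 * ((\<nu>^4)^d / (\<nu>^6)^d)"
    proof -
      have a1: "\<nu>^(4*(k-j)) = \<nu>^4 * (\<nu>^4)^d"
      proof -
        have "4*(k-j) = 4 + 4*d" using k by simp
        then show ?thesis by (simp only: power_add power_mult)
      qed
      have a2: "\<nu>^(Suc j)/\<nu>^k = 1/\<nu>^d" using nu by (simp add: k power_add)
      have a3: "(1/\<nu>^d)^6 = 1/(\<nu>^6)^d" by (simp add: power_one_over flip: power_mult) (simp add: mult.commute)
      show ?thesis by (simp only: a1 a2 a3) simp
    qed
    also have "\<dots> \<le> Lj * \<nu>^6 * (1/\<nu>)^(Suc d)"
    proof -
      have "(\<nu>^4)^d / (\<nu>^6)^d * \<nu>^4 \<le> \<nu>^6 * (1/\<nu>)^(Suc d)"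
      proof -
        have "(\<nu>^4)^d * \<nu>^4 * \<nu>^(Suc d) \<le> \<nu>^6 * (\<nu>^6)^d"
        proof -
          have "(\<nu>^4)^d * \<nu>^4 * \<nu>^(Suc d) = \<nu>^(5*d+5)"
          proof -
            have ex: "5*d+5 = 4*d + 4 + Suc d" by simp
            show ?thesis by (simp only: ex power_add power_mult)
          qed
          also have "\<dots> \<le> \<nu>^(6*d+6)" using nu by (intro power_increasing) auto
          also have "\<dots> = (\<nu>^6)^d * \<nu>^6" by (simp only: power_add power_mult)
          also have "\<dots> = \<nu>^6 * (\<nu>^6)^d" by (rule mult.commute)
          finally show ?thesis .
        qed
        then show ?thesis using nu by (simp add: field_simps power_one_over)
      qed
      from mult_left_mono[OF this Lj]
      have "Lj * ((\<nu>^4)^d / (\<nu>^6)^d * \<nu>^4) \<le> Lj * (\<nu>^6 * (1/\<nu>)^(Suc d))" .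
      moreover have "Lj * \<nu>^4 * ((\<nu>^4)^d / (\<nu>^6)^d) = Lj * ((\<nu>^4)^d / (\<nu>^6)^d * \<nu>^4)"
        by (simp only: mult_ac)
      moreover have "Lj * \<nu>^6 * (1/\<nu>)^(Suc d) = Lj * (\<nu>^6 * (1/\<nu>)^(Suc d))"
        by (simp only: mult.assoc)
      ultimately show ?thesis by linarith
    qed
    finally show ?thesis using False by (simp add: ad_def k)
  qed
  have r: "0 \<le> 1/\<nu>" "1/\<nu> < 1" using nu by auto
  show ?thesis unfolding PR_def
  proof (rule suminf_le_const[OF Pterm_summable])
    fix N
    have "(\<Sum>k<N. Pterm \<nu> e k t) \<le> (\<Sum>k<N. Lj * \<nu>^6 * (1/\<nu>)^(ad k j))" by (intro sum_mono tb)
    also have "\<dots> = Lj * \<nu>^6 * (\<Sum>k<N. (1/\<nu>)^(ad k j))" by (simp add: sum_distrib_left)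
    also have "\<dots> \<le> Lj * \<nu>^6 * (2/(1-1/\<nu>))"
      using Lj nu by (intro mult_left_mono geom_two_sided r) auto
    finally show "(\<Sum>k<N. Pterm \<nu> e k t) \<le> Lj * \<nu>^6 * (2/(1-1/\<nu>))" .
  qed
qed

end

definition theta :: "real \<Rightarrow> nat \<Rightarrow> real" where
  "theta \<sigma> m = max (1/2) ((1/\<sigma>)^(2*m+1))"

definition Rterm :: "real \<Rightarrow> (nat \<Rightarrow> real) \<Rightarrow> (nat \<Rightarrow> nat) \<Rightarrow> nat \<Rightarrow> 'a::real_normed_field \<Rightarrow> 'a" where
  "Rterm \<sigma> g n m w = of_real (g m) * (w / of_real ((\<sigma>^4)^m))^(n m)"

locale Rctx =
  fixes \<sigma> :: real and g :: "nat \<Rightarrow> real" and n :: "nat \<Rightarrow> nat"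
  assumes sig: "\<sigma> > 1" and g0: "\<And>m. 0 \<le> g m" and gth: "\<And>m. g m * theta \<sigma> m ^ n m \<le> (1/2)^m"
begin

lemma Rterm_bound0:
  fixes w :: "'a::real_normed_field"
  assumes "norm (w / of_real ((\<sigma>^4)^m)) \<le> theta \<sigma> m"
  shows "norm (Rterm \<sigma> g n m w) \<le> (1/2)^m"
proof -
  have "norm (Rterm \<sigma> g n m w) = g m * norm (w / of_real ((\<sigma>^4)^m)) ^ n m"
    using g0[of m] by (simp add: Rterm_def norm_mult norm_power)
  also have "\<dots> \<le> g m * theta \<sigma> m ^ n m"
    using assms g0[of m] by (intro mult_left_mono power_mono) auto
  also have "\<dots> \<le> (1/2)^m" by (rule gth)
  finally show ?thesis .
qed

lemma Rterm_bound:
  fixes w :: "'a::real_normed_field"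
  assumes "norm w \<le> R" "R * \<sigma> \<le> \<sigma>^(2*m)"
  shows "norm (Rterm \<sigma> g n m w) \<le> (1/2)^m"
proof (rule Rterm_bound0)
  have s4: "(\<sigma>^4)^m = \<sigma>^(2*m) * \<sigma>^(2*m)" by (simp flip: power_mult power_add)
  have p: "0 < \<sigma>^(2*m)" using sig by simp
  have "norm (w / of_real ((\<sigma>^4)^m)) = norm w / (\<sigma>^4)^m"
    using sig by (simp add: norm_divide norm_power)
  also have "\<dots> \<le> R / (\<sigma>^4)^m" using assms sig by (intro divide_right_mono) auto
  also have "\<dots> \<le> (\<sigma>^(2*m) / \<sigma>) / (\<sigma>^4)^m"
    using assms sig by (intro divide_right_mono) (auto simp: field_simps)
  also have "\<dots> = (1/\<sigma>)^(2*m+1)"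
    using sig p by (simp add: s4 power_one_over field_simps)
  also have "\<dots> \<le> theta \<sigma> m" by (simp add: theta_def)
  finally show "norm (w / of_real ((\<sigma>^4)^m)) \<le> theta \<sigma> m" .
qed

lemma Rterm_ev:
  "\<exists>N. \<forall>m\<ge>N. \<forall>w::'a::real_normed_field. norm w \<le> R \<longrightarrow> norm (Rterm \<sigma> g n m w) \<le> (1/2)^m"
proof -
  obtain N where N: "R * \<sigma> < \<sigma>^N" using real_arch_pow[OF sig] by blast
  have "R * \<sigma> \<le> \<sigma>^(2*m)" if "m \<ge> N" for m
  proof -
    have "\<sigma>^N \<le> \<sigma>^(2*m)" by (rule power_increasing) (use that sig in auto)
    then show ?thesis using N by linarith
  qed
  then show ?thesis using Rterm_bound by blast
qed

lemma Rterm_summable: "summable (\<lambda>m. Rterm \<sigma> g n m (w::'a::{real_normed_field,banach}))"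
proof -
  obtain N where N: "\<forall>m\<ge>N. \<forall>v::'a. norm v \<le> norm w \<longrightarrow> norm (Rterm \<sigma> g n m v) \<le> (1/2)^m"
    using Rterm_ev[of "norm w"] by blast
  then have "\<forall>m\<ge>N. norm (Rterm \<sigma> g n m w) \<le> (1/2)^m" by blast
  then have ev: "\<forall>\<^sub>F m in sequentially. norm (Rterm \<sigma> g n m w) \<le> (1/2)^m"
    unfolding eventually_sequentially by blast
  show ?thesis by (rule summable_comparison_test_ev[OF ev summable_geometric]) simp
qed

definition rhoc :: "complex \<Rightarrow> complex" where "rhoc z = (\<Sum>m. Rterm \<sigma> g n m z)"
definition rhoR :: "real \<Rightarrow> real" where "rhoR x = (\<Sum>m. Rterm \<sigma> g n m x)"

lemma rhoc_holo: "rhoc holomorphic_on UNIV"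
  unfolding rhoc_def
proof (rule holo_series)
  show "(\<lambda>z. Rterm \<sigma> g n m z) holomorphic_on UNIV" for m
    unfolding Rterm_def using sig by (auto intro!: holomorphic_intros)
  fix x :: complex
  define R where "R = norm x + 1"
  have nR: "norm z \<le> R" if "z \<in> cball x 1" for z
    using that norm_triangle_ineq2[of z x] by (auto simp: R_def dist_norm norm_minus_commute)
  obtain N where N: "\<forall>m\<ge>N. \<forall>w::complex. norm w \<le> R \<longrightarrow> norm (Rterm \<sigma> g n m w) \<le> (1/2)^m"
    using Rterm_ev by blast
  have sg: "summable (\<lambda>m. (1/2::real)^m)" by (rule summable_geometric) simp
  have evb: "\<forall>\<^sub>F m in sequentially. \<forall>z\<in>cball x 1. norm (Rterm \<sigma> g n m z) \<le> (1/2)^m"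
    unfolding eventually_sequentially using N nR by blast
  show "\<exists>d>0. cball x d \<subseteq> UNIV \<and>
          (\<exists>M. summable M \<and> (\<forall>\<^sub>F m in sequentially. \<forall>z\<in>cball x d. norm (Rterm \<sigma> g n m z) \<le> M m))"
  proof (intro exI[of _ 1] conjI)
    show "\<exists>M. summable M \<and> (\<forall>\<^sub>F m in sequentially. \<forall>z\<in>cball x 1. norm (Rterm \<sigma> g n m z) \<le> M m)"
      using sg evb by blast
  qed auto
qed simp

lemma rhoc_real: "rhoc (of_real x) = of_real (rhoR x)"
proof -
  have "(\<lambda>m. Rterm \<sigma> g n m (complex_of_real x)) = (\<lambda>m. of_real (Rterm \<sigma> g n m x))"
    by (rule ext) (simp add: Rterm_def)
  then show ?thesis unfolding rhoc_def rhoR_def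
    by (simp add: suminf_of_real[OF Rterm_summable[of x]])
qed

lemma Rterm_real: "Rterm \<sigma> g n m (x::real) = g m * (x / (\<sigma>^4)^m)^(n m)"
  by (simp add: Rterm_def)

lemma Rterm_nonneg: "0 \<le> x \<Longrightarrow> 0 \<le> Rterm \<sigma> g n m (x::real)"
  using g0[of m] sig by (simp add: Rterm_real)

lemma rhoR_nonneg: "0 \<le> x \<Longrightarrow> 0 \<le> rhoR x"
  unfolding rhoR_def by (intro suminf_nonneg Rterm_summable Rterm_nonneg)

lemma rhoR_mono: "0 \<le> x \<Longrightarrow> x \<le> y \<Longrightarrow> rhoR x \<le> rhoR y"
  unfolding rhoR_def
proof (intro suminf_le Rterm_summable)
  fix m assume "0 \<le> x" "x \<le> y"
  then have "(x / (\<sigma>^4)^m)^(n m) \<le> (y / (\<sigma>^4)^m)^(n m)"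
    using sig by (intro power_mono divide_right_mono) auto
  then show "Rterm \<sigma> g n m x \<le> Rterm \<sigma> g n m y" using g0[of m] by (simp add: Rterm_real mult_left_mono)
qed

lemma rhoR_lower: "(\<sigma>^4)^m \<le> x \<Longrightarrow> g m \<le> rhoR x"
proof -
  assume x: "(\<sigma>^4)^m \<le> x"
  have p: "0 < (\<sigma>^4)^m" using sig by simp
  have "1 \<le> (x / (\<sigma>^4)^m)^(n m)" using x p by (intro one_le_power) (simp add: field_simps)
  then have "g m \<le> Rterm \<sigma> g n m x" using g0[of m] by (simp add: Rterm_real mult_le_cancel_left1)
  also have "\<dots> \<le> rhoR x" unfolding rhoR_def
    using x p by (intro term_le_suminf_real Rterm_summable Rterm_nonneg) simp
  finally show ?thesis .
qed

lemma rhoR_half: "rhoR (1/2) \<le> 2"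
proof -
  have "Rterm \<sigma> g n m (1/2::real) \<le> (1/2)^m" for m
  proof -
    have "norm ((1/2::real) / of_real ((\<sigma>^4)^m)) \<le> 1/2"
      using sig by (simp add: field_simps)
    also have "\<dots> \<le> theta \<sigma> m" by (simp add: theta_def)
    finally show ?thesis using Rterm_bound0[of "1/2::real" m] by simp
  qed
  then have "rhoR (1/2) \<le> (\<Sum>m. (1/2::real)^m)" unfolding rhoR_def
    by (intro suminf_le Rterm_summable summable_geometric) auto
  also have "\<dots> = 2" using suminf_geometric[of "1/2::real"] by simp
  finally show ?thesis .
qed

end

lemma Re_real_deriv:
  assumes "G holomorphic_on \<Omega>" "open \<Omega>" "complex_of_real t \<in> \<Omega>"
  shows "((\<lambda>s. Re (G (of_real s))) has_real_derivative Re (deriv G (of_real t))) (at t)"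
proof -
  have "(G has_field_derivative deriv G (of_real t)) (at (of_real t))"
    using holomorphic_derivI[OF assms] by blast
  then have "((\<lambda>x. G (of_real x)) has_vector_derivative deriv G (of_real t)) (at t)"
    by (rule has_vector_derivative_real_field)
  then have "((\<lambda>x. G (of_real x)) has_derivative (\<lambda>x. x *\<^sub>R deriv G (of_real t))) (at t)"
    by (simp add: has_vector_derivative_def)
  from bounded_linear.has_derivative[OF bounded_linear_Re this]
  have "((\<lambda>x. Re (G (of_real x))) has_derivative (\<lambda>x. Re (x *\<^sub>R deriv G (of_real t)))) (at t)" .
  then show ?thesis
    by (simp add: has_field_derivative_def mult.commute[of _ "Re _"])
qed

lemma smooth_from_holo:
  assumes hol: "F holomorphic_on \<Omega>" and op: "open \<Omega>" and sub: "\<And>t. t > 0 \<Longrightarrow> complex_of_real t \<in> \<Omega>"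
  shows "smooth_on {0<..} (\<lambda>t. Re (F (of_real t)))"
proof -
  define h where "h = (\<lambda>t. Re (F (of_real t)))"
  have hd: "\<And>n. (deriv ^^ n) F holomorphic_on \<Omega>"
    using holomorphic_higher_deriv[OF hol op] .
  have ev: "\<forall>\<^sub>F s in nhds t. s > 0" if "t > 0" for t :: real
    using eventually_nhds_in_open[of "{0<..}" t] that by simp
  have eq: "\<forall>t>0. (deriv ^^ n) h t = Re ((deriv ^^ n) F (of_real t))" for n
  proof (induction n)
    case 0 then show ?case by (simp add: h_def)
  next
    case (Suc n)
    show ?case
    proof (intro allI impI)
      fix t :: real assume t: "t > 0"
      have "(deriv ^^ Suc n) h t = deriv ((deriv ^^ n) h) t" by simp
      also have "\<dots> = deriv (\<lambda>s. Re ((deriv ^^ n) F (of_real s))) t"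
        apply (rule deriv_cong_ev[OF _ refl])
        using ev[OF t] Suc.IH by (auto elim!: eventually_mono)
      also have "\<dots> = Re (deriv ((deriv ^^ n) F) (of_real t))"
        by (rule DERIV_imp_deriv[OF Re_real_deriv[OF hd op sub[OF t]]])
      finally show "(deriv ^^ Suc n) h t = Re ((deriv ^^ Suc n) F (of_real t))" by simp
    qed
  qed
  have "((deriv ^^ n) h) differentiable (at t)" if t: "t > 0" for n t
  proof -
    have "((\<lambda>s. Re ((deriv ^^ n) F (of_real s))) has_real_derivative Re (deriv ((deriv ^^ n) F) (of_real t))) (at t)"
      by (rule Re_real_deriv[OF hd op sub[OF t]])
    then have "((deriv ^^ n) h has_real_derivative Re (deriv ((deriv ^^ n) F) (of_real t))) (at t)"
      apply (subst DERIV_cong_ev[OF refl _ refl])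
      using ev[OF t] eq[of n] by (auto elim!: eventually_mono)
    then show ?thesis using real_differentiable_def by blast
  qed
  then show ?thesis unfolding smooth_on_def h_def[symmetric] by auto
qed

lemma block_exists:
  fixes \<nu> x :: real assumes nu: "\<nu> > 1" and x: "1 \<le> x"
  shows "\<exists>j. \<nu>^j \<le> x \<and> x \<le> \<nu>^Suc j"
proof -
  obtain N where N: "x < \<nu>^N" using real_arch_pow[OF nu] by blast
  define S where "S = {k. \<nu>^k \<le> x}"
  have "S \<subseteq> {..<N}"
  proof
    fix k assume "k \<in> S"
    then have "\<nu>^k < \<nu>^N" using N by (simp add: S_def)
    then show "k \<in> {..<N}" using power_less_imp_less_exp[OF nu] by auto
  qed
  then have fin: "finite S" by (rule finite_subset) simp
  have "0 \<in> S" using x by (simp add: S_def)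
  define j where "j = Max S"
  have "j \<in> S" unfolding j_def using fin \<open>0 \<in> S\<close> by (intro Max_in) auto
  moreover have "Suc j \<notin> S" using Max_ge[OF fin, of "Suc j"] by (auto simp: j_def)
  ultimately show ?thesis by (auto simp: S_def intro!: exI[of _ j])
qed

lemma eta_le:
  assumes mu: "\<mu> > 1" and Hpos: "\<forall>t>0. H t > 0" and t0: "t0 > 0"
    and t: "t0/\<mu> < t" "t < t0*\<mu>"
  shows "eta \<mu> H t0 \<le> H t"
  unfolding eta_def
proof (rule cInf_lower)
  show "H t \<in> H ` {t0/\<mu><..<t0*\<mu>}" using t by auto
  have "0 < t0/\<mu>" using mu t0 by simp
  then show "bdd_below (H ` {t0/\<mu><..<t0*\<mu>})"
    using Hpos by (intro bdd_belowI[of _ 0]) (auto intro: less_imp_le)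
qed

lemma pow4_eq: "0 < (x::real) \<Longrightarrow> x^4 = x powr 4"
  by (simp add: powr_numeral)

lemma pow4_powr: "0 \<le> (x::real) \<Longrightarrow> (x^4) powr (1/4) = x"
proof -
  assume x: "0 \<le> x"
  show ?thesis
  proof (cases "x = 0")
    case False
    then have xp: "x > 0" using x by simp
    have "(x^4) powr (1/4) = (x powr 4) powr (1/4)" by (simp only: pow4_eq[OF xp])
    also have "\<dots> = x powr (4 * (1/4))" by (rule powr_powr)
    also have "\<dots> = x" using xp by simp
    finally show ?thesis .
  qed simp
qed

lemma pow4_powr_neg: "0 < (x::real) \<Longrightarrow> (x^4) powr (-1/4) = 1/x"
proof -
  assume x: "0 < x"
  have "(x^4) powr (-1/4) = (x powr 4) powr (-1/4)" by (simp only: pow4_eq[OF x])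
  also have "\<dots> = x powr (4 * (-1/4))" by (rule powr_powr)
  also have "\<dots> = 1/x" using x by (simp add: powr_neg_one)
  finally show ?thesis .
qed

lemma main_H:
  fixes \<mu> :: real and H :: "real \<Rightarrow> real"
  assumes mu: "\<mu> > 1" and Hpos: "\<forall>t>0. H t > 0" and etapos: "\<forall>t>0. eta \<mu> H t > 0"
    and int: "set_integrable lborel {1..} (\<lambda>t. (eta \<mu> H t * t) powr (-1/4))"
  shows "\<exists>h :: real \<Rightarrow> real.
          smooth_on {0<..} h \<and>
          (\<forall>t>0. h t > 0) \<and>
          (\<forall>t>0. h t \<le> H t) \<and>
          (\<forall>t1 t2. 0 < t1 \<and> t1 \<le> t2 \<longrightarrow> h t1 \<le> h t2) \<and>
          (\<forall>\<alpha>>0. \<forall>t\<ge>2. h (\<alpha> * t) \<le> (exp 2 * max 1 (\<alpha>^6)) * h t) \<and>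
          set_integrable lborel {1..} (\<lambda>t. (h t * t) powr (-1/4))"
proof -
  define \<sigma> where "\<sigma> = \<mu> powr (1/8)"
  have sig: "\<sigma> > 1" using mu by (simp add: \<sigma>_def)
  define \<nu> where "\<nu> = \<sigma>^4"
  have nu: "\<nu> > 1" using sig by (simp add: \<nu>_def one_less_power)
  have mu_nu: "\<mu> = \<nu>^2"
  proof -
    have "\<nu>^2 = \<sigma> powr 8" using sig by (simp add: \<nu>_def powr_numeral flip: power_mult)
    also have "\<dots> = \<mu>" using mu by (simp add: \<sigma>_def powr_powr)
    finally show ?thesis by simp
  qed
  define f where "f t = (eta \<mu> H t * t) powr (-1/4)" for t
  have fnn: "f t \<ge> 0" for t by (simp add: f_def)
  obtain tk B where sB: "summable B" and B0: "\<And>k. 0 \<le> B k"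
    and tk: "\<And>k. \<nu>^k \<le> tk k" "\<And>k. tk k \<le> \<nu>^(Suc k)" "\<And>k. f (tk k) \<le> B k / \<nu>^k"
    using block_extract[OF nu int[folded f_def] fnn] by blast
  have tk0: "tk k > 0" for k
  proof -
    have "0 < \<nu>^k" using nu by simp
    then show ?thesis using tk(1)[of k] by linarith
  qed
  define L where "L k = eta \<mu> H (tk k)" for k
  have L0: "L k > 0" for k using etapos tk0 by (simp add: L_def)
  have HL: "L j \<le> H t" if "\<nu>^j \<le> t" "t \<le> \<nu>^Suc j" for j t
    unfolding L_def
  proof (rule eta_le[OF mu Hpos tk0])
    have p: "0 < \<nu>^j" using nu by simp
    have "tk j / \<mu> \<le> \<nu>^Suc j / \<nu>^2" using tk(2)[of j] mu by (simp add: mu_nu divide_right_mono)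
    also have "\<dots> < \<nu>^j" using nu p by (simp add: field_simps power2_eq_square)
    finally show "tk j / \<mu> < t" using that by linarith
    have "\<nu> < \<nu>^2" using nu by (simp add: power2_eq_square)
    then have "\<nu>^j * \<nu> < \<nu>^j * \<nu>^2" using p by (rule mult_strict_left_mono)
    then have "t < \<nu>^j * \<nu>^2" using that by (simp add: mult.commute)
    also have "\<dots> \<le> tk j * \<mu>" using tk(1)[of j] nu by (simp add: mu_nu mult_right_mono)
    finally show "t < tk j * \<mu>" .
  qed
  define \<kappa> where "\<kappa> = (1 - 1/\<nu>) / (2 * \<nu>^6)"
  have ka: "\<kappa> > 0" using nu by (simp add: \<kappa>_def)
  define D where "D = \<kappa> powr (-1/4) * \<sigma>"
  have LB: "(\<kappa> * L i) powr (-1/4) * \<sigma>^(3*i) \<le> D * B i" for i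
  proof -
    have Lt: "L i powr (-1/4) = f (tk i) * tk i powr (1/4)"
    proof -
      have "f (tk i) = L i powr (-1/4) * tk i powr (-1/4)"
        using L0[of i] tk0[of i] by (simp add: f_def L_def powr_mult)
      moreover have "tk i powr (-1/4) * tk i powr (1/4) = 1"
        using tk0[of i] by (simp add: powr_add[symmetric])
      ultimately show ?thesis by (metis mult.assoc mult.right_neutral)
    qed
    have "tk i powr (1/4) \<le> (\<nu>^Suc i) powr (1/4)" using tk(2)[of i] tk0[of i] by (intro powr_mono2) auto
    also have "(\<nu>^Suc i) powr (1/4) = \<sigma>^Suc i"
    proof -
      have "\<nu>^Suc i = (\<sigma>^Suc i)^4" unfolding \<nu>_def by (metis power_mult mult.commute)
      then show ?thesis using sig by (simp add: pow4_powr)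
    qed
    finally have t4: "tk i powr (1/4) \<le> \<sigma>^Suc i" .
    have "L i powr (-1/4) \<le> (B i / \<nu>^i) * \<sigma>^Suc i"
      unfolding Lt using tk(3)[of i] t4 fnn B0[of i] nu by (intro mult_mono) auto
    also have "\<dots> = B i * \<sigma> / \<sigma>^(3*i)"
    proof -
      have "\<nu>^i = \<sigma>^(3*i) * \<sigma>^i" by (simp add: \<nu>_def flip: power_mult power_add)
      then show ?thesis using sig by (simp add: field_simps)
    qed
    finally have "L i powr (-1/4) * \<sigma>^(3*i) \<le> B i * \<sigma>" using sig by (simp add: field_simps)
    then have "\<kappa> powr (-1/4) * (L i powr (-1/4) * \<sigma>^(3*i)) \<le> \<kappa> powr (-1/4) * (B i * \<sigma>)"
      by (intro mult_left_mono) auto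
    moreover have "(\<kappa> * L i) powr (-1/4) = \<kappa> powr (-1/4) * L i powr (-1/4)"
      using ka L0[of i] by (simp add: powr_mult)
    ultimately show ?thesis by (simp add: D_def mult_ac)
  qed
  obtain e where e0: "\<And>k. e k > 0"
    and eb1: "\<And>k j. k \<le> j \<Longrightarrow> e k \<le> (\<kappa> * L j) * (1/\<sigma>)^(4*(j-k))"
    and eb2: "\<And>k j. j < k \<Longrightarrow> e k \<le> (\<kappa> * L j) * \<sigma>^(16*(k-j))"
    and esum: "summable (\<lambda>j. e j powr (-1/4) * \<sigma>^(3*j))"
  proof -
    have a1: "\<And>i. \<kappa> * L i > 0" using ka L0 by simp
    have a2: "summable (\<lambda>i. D * B i)" using sB by (rule summable_mult)
    have a3: "\<And>i. D * B i \<ge> 0" using B0 sig by (simp add: D_def)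
    show ?thesis using build_e[OF sig a1 a2 a3 LB] that by blast
  qed
  have eb1': "e k \<le> (\<kappa> * L j) * (1/\<nu>)^(j-k)" if "k \<le> j" for k j
    using eb1[OF that] by (simp add: \<nu>_def power_one_over flip: power_mult)
  have eb2': "e k \<le> (\<kappa> * L j) * \<nu>^(4*(k-j))" if "j < k" for k j
  proof -
    have "\<sigma>^(16*(k-j)) = \<nu>^(4*(k-j))" by (simp add: \<nu>_def flip: power_mult)
    then show ?thesis using eb2[OF that] by simp
  qed
  have eC: "e k \<le> (\<kappa> * L 0) * \<nu>^(4*k)" for k
  proof (cases "k = 0")
    case True then show ?thesis using eb1'[of 0 0] by simp
  next
    case False then show ?thesis using eb2'[of 0 k] by simp
  qed
  interpret P: Pctx \<nu> e "\<kappa> * L 0" using nu e0 eC by unfold_locales auto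
  have PRup: "P.PR t \<le> L j" if "0 \<le> t" "t \<le> \<nu>^Suc j" for t j
  proof -
    have "P.PR t \<le> (\<kappa> * L j) * \<nu>^6 * (2/(1-1/\<nu>))"
      by (rule P.PR_upper[OF that eb1' eb2'])
    also have "\<dots> = L j" using nu by (simp add: \<kappa>_def field_simps)
    finally show ?thesis .
  qed
  define P1 where "P1 = P.PR 1"
  have P1pos: "P1 > 0"
  proof -
    have "e 0 / 8 \<le> P.PR 1" by (rule P.PR_lower) simp
    then show ?thesis using e0[of 0] by (simp add: P1_def)
  qed
  define Lz where "Lz m = eta \<mu> H (1/\<nu>^m)" for m
  have Lz0: "Lz m > 0" for m using etapos nu by (simp add: Lz_def)
  have HLz: "Lz m \<le> H t" if "1/\<nu>^Suc m \<le> t" "t \<le> 1/\<nu>^m" for m t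
    unfolding Lz_def
  proof (rule eta_le[OF mu Hpos])
    have p: "0 < \<nu>^m" using nu by simp
    show "0 < 1/\<nu>^m" using p by simp
    have "1/\<nu>^m / \<mu> = 1/(\<nu>^m * \<nu>^2)" by (simp add: mu_nu)
    also have "\<dots> < 1/\<nu>^Suc m"
    proof -
      have "\<nu> < \<nu>^2" using nu by (simp add: power2_eq_square)
      then have "\<nu>^m * \<nu> < \<nu>^m * \<nu>^2" using p by (rule mult_strict_left_mono)
      then show ?thesis using p nu by (simp add: divide_strict_left_mono mult.commute)
    qed
    finally show "1/\<nu>^m / \<mu> < t" using that by linarith
    have "1/\<nu>^m < 1/\<nu>^m * \<mu>" using p mu by (simp add: divide_strict_right_mono)
    then show "t < 1/\<nu>^m * \<mu>" using that by linarith
  qed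
  define g where "g m = max 0 (ln (P1 / Lz m))" for m
  have g0: "0 \<le> g m" for m by (simp add: g_def)
  have "\<exists>k. g m * theta \<sigma> m ^ k \<le> (1/2)^m" for m
  proof -
    have th0: "0 < theta \<sigma> m" by (simp add: theta_def)
    have "(1/\<sigma>)^(Suc (2*m)) < 1" using sig by (intro power_Suc_less_one) auto
    then have th1: "theta \<sigma> m < 1" by (simp add: theta_def)
    have "0 < (1/2::real)^m / (g m + 1)" using g0[of m] by simp
    then obtain k where k: "theta \<sigma> m ^ k < (1/2)^m / (g m + 1)"
      using real_arch_pow_inv[OF _ th1] by blast
    have "g m * theta \<sigma> m ^ k \<le> (g m + 1) * theta \<sigma> m ^ k"
      using th0 by (intro mult_right_mono) auto
    also have "\<dots> < (1/2)^m"
    proof -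
      have gp: "0 < g m + 1" using g0[of m] by simp
      have "theta \<sigma> m ^ k * (g m + 1) < (1/2)^m" using k by (simp only: pos_less_divide_eq[OF gp])
      then show ?thesis by (simp only: mult.commute)
    qed
    finally show ?thesis by (intro exI[of _ k]) simp
  qed
  then obtain n where n: "\<And>m. g m * theta \<sigma> m ^ n m \<le> (1/2)^m" by metis
  interpret R: Rctx \<sigma> g n using sig g0 n by unfold_locales auto
  define F where "F z = exp (- R.rhoc (1/z)) * P.Pc z" for z
  define \<Omega> where "\<Omega> = {z::complex. 0 < Re z}"
  have opO: "open \<Omega>" by (simp add: \<Omega>_def open_halfspace_Re_gt)
  have Fhol: "F holomorphic_on \<Omega>"
  proof -
    have inv: "(\<lambda>z::complex. 1/z) holomorphic_on \<Omega>"
      by (intro holomorphic_intros) (auto simp: \<Omega>_def)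
    have "(R.rhoc \<circ> (\<lambda>z. 1/z)) holomorphic_on \<Omega>"
      by (rule holomorphic_on_compose[OF inv holomorphic_on_subset[OF R.rhoc_holo]]) auto
    then have r: "(\<lambda>z. R.rhoc (1/z)) holomorphic_on \<Omega>" by (simp add: o_def)
    have p: "P.Pc holomorphic_on \<Omega>" using P.Pc_holo by (simp add: \<Omega>_def)
    show ?thesis unfolding F_def by (intro holomorphic_intros r p)
  qed
  define h where "h t = Re (F (of_real t))" for t
  have smooth: "smooth_on {0<..} h"
    unfolding h_def by (rule smooth_from_holo[OF Fhol opO]) (simp add: \<Omega>_def)
  have h_eq: "h t = exp (- R.rhoR (1/t)) * P.PR t" for t
  proof -
    have "F (of_real t) = exp (- of_real (R.rhoR (1/t))) * of_real (P.PR t)"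
      unfolding F_def using R.rhoc_real[of "1/t"] P.Pc_real[of t] by simp
    also have "\<dots> = of_real (exp (- R.rhoR (1/t)) * P.PR t)"
      by (simp flip: exp_of_real)
    finally show ?thesis by (simp add: h_def)
  qed
  have rho0: "0 \<le> R.rhoR (1/t)" if "t > 0" for t using that by (intro R.rhoR_nonneg) simp
  have PRpos: "0 < P.PR t" if "t > 0" for t
  proof -
    have "0 < t^2/(1+t^2)" using that by (simp add: add_pos_nonneg)
    then have "0 < psi t" by (simp add: psi_def)
    then have "0 < Pterm \<nu> e 0 t" using e0[of 0] by (simp add: P.Pterm_real)
    also have "\<dots> \<le> P.PR t" unfolding P.PR_def
      by (intro term_le_suminf_real P.Pterm_summable P.Pterm_nonneg)
    finally show ?thesis .
  qed
  have hpos: "h t > 0" if "t > 0" for t using PRpos[OF that] by (simp add: h_eq)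
  have hle: "h t \<le> H t" if t: "t > 0" for t
  proof (cases "1 \<le> t")
    case True
    then obtain j where j: "\<nu>^j \<le> t" "t \<le> \<nu>^Suc j" using block_exists[OF nu] by blast
    have "h t \<le> P.PR t" unfolding h_eq
      using rho0[OF t] P.PR_nonneg[of t] by (intro mult_left_le_one_le) auto
    also have "\<dots> \<le> L j" using PRup[of t j] j t by simp
    also have "\<dots> \<le> H t" using HL[OF j] .
    finally show ?thesis .
  next
    case False
    then have "1 \<le> 1/t" using t by (simp add: field_simps)
    then obtain m where m: "\<nu>^m \<le> 1/t" "1/t \<le> \<nu>^Suc m" using block_exists[OF nu] by blast
    have pm: "0 < \<nu>^m" using nu by simp
    have tm: "1/\<nu>^Suc m \<le> t" "t \<le> 1/\<nu>^m"
      using m t pm nu by (auto simp: field_simps)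
    have "g m \<le> R.rhoR (1/t)" using m(1) by (intro R.rhoR_lower) (simp add: \<nu>_def)
    then have "exp (- R.rhoR (1/t)) \<le> exp (- g m)" by simp
    also have "\<dots> \<le> Lz m / P1"
    proof -
      have "ln (P1 / Lz m) \<le> g m" by (simp add: g_def)
      then have "- g m \<le> ln (Lz m / P1)" using P1pos Lz0[of m] by (simp add: ln_div)
      then have "exp (- g m) \<le> exp (ln (Lz m / P1))" by simp
      then show ?thesis using P1pos Lz0[of m] by simp
    qed
    finally have ex: "exp (- R.rhoR (1/t)) \<le> Lz m / P1" .
    have "P.PR t \<le> P1" unfolding P1_def using t False by (intro P.PR_mono) auto
    then have "h t \<le> (Lz m / P1) * P1" unfolding h_eq
      using ex P.PR_nonneg[of t] Lz0[of m] P1pos by (intro mult_mono) auto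
    also have "\<dots> = Lz m" using P1pos by simp
    also have "\<dots> \<le> H t" using HLz[OF tm] .
    finally show ?thesis .
  qed
  have hmono: "h t1 \<le> h t2" if "0 < t1" "t1 \<le> t2" for t1 t2
  proof -
    have "R.rhoR (1/t2) \<le> R.rhoR (1/t1)" using that by (intro R.rhoR_mono) (auto simp: field_simps)
    then have "exp (- R.rhoR (1/t1)) \<le> exp (- R.rhoR (1/t2))" by simp
    moreover have "P.PR t1 \<le> P.PR t2" using that by (intro P.PR_mono) auto
    ultimately show ?thesis unfolding h_eq using P.PR_nonneg[of t1] by (intro mult_mono) auto
  qed
  have hdouble: "h (\<alpha> * t) \<le> (exp 2 * max 1 (\<alpha>^6)) * h t" if a: "\<alpha> > 0" and t: "t \<ge> 2" for \<alpha> t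
  proof -
    have tp: "t > 0" using t by simp
    have b1: "1 \<le> exp 2 * max 1 (\<alpha>^6)"
    proof -
      have "1 \<le> exp (2::real)" by simp
      moreover have "1 \<le> max 1 (\<alpha>^6)" by simp
      ultimately show ?thesis using mult_mono[of 1 "exp 2" 1 "max 1 (\<alpha>^6)"] by simp
    qed
    show ?thesis
    proof (cases "\<alpha> \<le> 1")
      case True
      have "h (\<alpha> * t) \<le> h t" using a tp True by (intro hmono) (auto simp: mult_le_cancel_right1)
      also have "\<dots> \<le> (exp 2 * max 1 (\<alpha>^6)) * h t"
        using b1 hpos[OF tp] by (simp add: mult_le_cancel_right1)
      finally show ?thesis .
    next
      case False
      have at: "\<alpha> * t > 0" using a tp by simp
      have e1: "exp (- R.rhoR (1/(\<alpha>*t))) \<le> 1" using rho0[OF at] by simp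
      have "R.rhoR (1/t) \<le> R.rhoR (1/2)" using t by (intro R.rhoR_mono) (auto simp: field_simps)
      then have "R.rhoR (1/t) \<le> 2" using R.rhoR_half by linarith
      then have e2: "exp (-2) \<le> exp (- R.rhoR (1/t))" by simp
      have "h (\<alpha> * t) \<le> 1 * P.PR (\<alpha> * t)" unfolding h_eq
        using e1 P.PR_nonneg by (intro mult_right_mono) auto
      also have "\<dots> \<le> \<alpha>^6 * P.PR t" using P.PR_scale[of \<alpha> t] False tp by simp
      also have "\<dots> = exp 2 * \<alpha>^6 * (exp (-2) * P.PR t)" by (simp add: exp_minus field_simps)
      also have "\<dots> \<le> exp 2 * \<alpha>^6 * (exp (- R.rhoR (1/t)) * P.PR t)"
        using e2 P.PR_nonneg[of t] by (intro mult_left_mono mult_right_mono) auto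
      also have "\<dots> \<le> (exp 2 * max 1 (\<alpha>^6)) * h t"
        unfolding h_eq[of t] using hpos[OF tp] unfolding h_eq[of t]
        by (intro mult_right_mono mult_left_mono) auto
      finally show ?thesis .
    qed
  qed
  define f2 where "f2 t = (h t * t) powr (-1/4)" for t
  have hcont: "continuous_on {1..} h"
  proof (rule continuous_at_imp_continuous_on, intro ballI)
    fix t :: real assume "t \<in> {1..}"
    then have "t \<in> {0<..}" by simp
    then have "((deriv ^^ 0) h) differentiable (at t)" using smooth unfolding smooth_on_def by blast
    then show "isCont h t" by (simp add: differentiable_imp_continuous_within)
  qed
  have f2cont: "continuous_on {1..} f2"
  proof -
    have hp1: "\<And>t. 1 \<le> t \<Longrightarrow> 0 < h t" using hpos by simp
    show ?thesis unfolding f2_def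
      by (intro continuous_intros hcont) (auto dest: hp1)
  qed
  have meas: "(\<lambda>x. indicator {1..} x *\<^sub>R f2 x) \<in> borel_measurable lborel"
    by (subst measurable_lborel2) (rule borel_measurable_continuous_on_indicator[OF _ f2cont], simp)
  define \<Phi>1 where "\<Phi>1 = exp (- R.rhoR 1)"
  have Phi0: "\<Phi>1 > 0" by (simp add: \<Phi>1_def)
  define K where "K = (\<Phi>1/8) powr (-1/4)"
  define c where "c j = K * e j powr (-1/4) / \<sigma>^j" for j
  have c0: "0 \<le> c j" for j using sig by (simp add: c_def K_def)
  have cb: "f2 x \<le> c j" if x: "\<nu>^j \<le> x" "x \<le> \<nu>^Suc j" for x j
  proof -
    have pj: "0 < \<nu>^j" using nu by simp
    have x1: "1 \<le> x" using x nu by (smt (verit) one_le_power)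
    have xp: "0 < x" using x1 by simp
    have "R.rhoR (1/x) \<le> R.rhoR 1" using x1 by (intro R.rhoR_mono) (auto simp: field_simps)
    then have "\<Phi>1 \<le> exp (- R.rhoR (1/x))" by (simp add: \<Phi>1_def)
    moreover have "e j / 8 \<le> P.PR x" using x by (intro P.PR_lower)
    ultimately have "\<Phi>1 * (e j / 8) \<le> h x" unfolding h_eq
      using Phi0 e0[of j] by (intro mult_mono) auto
    then have le: "\<Phi>1 * (e j / 8) * \<nu>^j \<le> h x * x"
      using x pj hpos[OF xp] by (intro mult_mono) auto
    have pos: "0 < \<Phi>1 * (e j / 8) * \<nu>^j" using Phi0 e0[of j] pj by simp
    have "f2 x \<le> (\<Phi>1 * (e j / 8) * \<nu>^j) powr (-1/4)" unfolding f2_def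
      by (rule powr_mono2'[OF _ pos le]) simp
    also have "\<dots> = (\<Phi>1/8) powr (-1/4) * e j powr (-1/4) * (\<nu>^j) powr (-1/4)"
    proof -
      have eqp: "\<Phi>1 * (e j / 8) * \<nu>^j = ((\<Phi>1/8) * e j) * \<nu>^j" by simp
      have "(((\<Phi>1/8) * e j) * \<nu>^j) powr (-1/4) = ((\<Phi>1/8) * e j) powr (-1/4) * (\<nu>^j) powr (-1/4)"
        using Phi0 e0[of j] pj by (subst powr_mult) auto
      moreover have "((\<Phi>1/8) * e j) powr (-1/4) = (\<Phi>1/8) powr (-1/4) * e j powr (-1/4)"
        using Phi0 e0[of j] by (subst powr_mult) auto
      ultimately show ?thesis by (simp only: eqp)
    qed
    also have "(\<nu>^j) powr (-1/4) = 1/\<sigma>^j"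
    proof -
      have eq: "\<nu>^j = (\<sigma>^j)^4" unfolding \<nu>_def by (metis power_mult mult.commute)
      have sp: "0 < \<sigma>^j" using sig by simp
      have "(\<nu>^j) powr (-1/4) = ((\<sigma>^j)^4) powr (-1/4)" by (simp only: eq)
      also have "\<dots> = 1/\<sigma>^j" by (rule pow4_powr_neg[OF sp])
      finally show ?thesis .
    qed
    finally show ?thesis by (simp add: c_def K_def)
  qed
  have csum: "summable (\<lambda>j. c j * (\<nu>^Suc j - \<nu>^j))"
  proof -
    have "c j * (\<nu>^Suc j - \<nu>^j) = (K * (\<sigma>^4 - 1)) * (e j powr (-1/4) * \<sigma>^(3*j))" for j
    proof -
      have eqn: "\<nu>^Suc j - \<nu>^j = \<sigma>^(3*j) * \<sigma>^j * (\<sigma>^4 - 1)"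
        by (simp add: \<nu>_def algebra_simps flip: power_mult power_add)
      have "c j * (\<nu>^Suc j - \<nu>^j) = K * e j powr (-1/4) / \<sigma>^j * (\<sigma>^(3*j) * \<sigma>^j * (\<sigma>^4 - 1))"
        by (simp only: c_def eqn)
      also have "\<dots> = (K * (\<sigma>^4 - 1)) * (e j powr (-1/4) * \<sigma>^(3*j))"
        using sig by (simp add: field_simps)
      finally show ?thesis .
    qed
    then show ?thesis using summable_mult[OF esum, of "K * (\<sigma>^4 - 1)"] by simp
  qed
  define Wc where "Wc j = {\<nu>^j..\<nu>^Suc j}" for j
  have "(\<integral>\<^sup>+ x. ennreal (norm (indicator {1..} x *\<^sub>R f2 x)) \<partial>lborel)
        \<le> (\<integral>\<^sup>+ x. (\<Sum>j. ennreal (c j) * indicator (Wc j) x) \<partial>lborel)"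
  proof (rule nn_integral_mono)
    fix x :: real
    show "ennreal (norm (indicator {1..} x *\<^sub>R f2 x)) \<le> (\<Sum>j. ennreal (c j) * indicator (Wc j) x)"
    proof (cases "1 \<le> x")
      case True
      then obtain j where j: "\<nu>^j \<le> x" "x \<le> \<nu>^Suc j" using block_exists[OF nu] by blast
      have "ennreal (norm (indicator {1..} x *\<^sub>R f2 x)) = ennreal (f2 x)"
        using True by (simp add: f2_def)
      also have "\<dots> \<le> ennreal (c j) * indicator (Wc j) x"
        using cb[OF j] j by (simp add: Wc_def ennreal_leI)
      also have "\<dots> \<le> (\<Sum>j. ennreal (c j) * indicator (Wc j) x)"
        by (rule term_le_suminf_ennreal)
      finally show ?thesis .
    qed simp
  qed
  also have "\<dots> = (\<Sum>j. \<integral>\<^sup>+ x. ennreal (c j) * indicator (Wc j) x \<partial>lborel)"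
    by (rule nn_integral_suminf) (simp add: Wc_def)
  also have "\<dots> = (\<Sum>j. ennreal (c j * (\<nu>^Suc j - \<nu>^j)))"
  proof (rule suminf_cong)
    fix j
    have le: "\<nu>^j \<le> \<nu>^Suc j" using nu by simp
    have "(\<integral>\<^sup>+ x. ennreal (c j) * indicator (Wc j) x \<partial>lborel) = ennreal (c j) * emeasure lborel (Wc j)"
      by (rule nn_integral_cmult_indicator) (simp add: Wc_def)
    also have "\<dots> = ennreal (c j) * ennreal (\<nu>^Suc j - \<nu>^j)"
      using le by (simp add: Wc_def)
    also have "\<dots> = ennreal (c j * (\<nu>^Suc j - \<nu>^j))"
      using c0[of j] le by (simp add: ennreal_mult)
    finally show "(\<integral>\<^sup>+ x. ennreal (c j) * indicator (Wc j) x \<partial>lborel) = ennreal (c j * (\<nu>^Suc j - \<nu>^j))" .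
  qed
  also have "\<dots> = ennreal (\<Sum>j. c j * (\<nu>^Suc j - \<nu>^j))"
    using c0 nu by (intro suminf_ennreal2 csum) (simp add: mult_nonneg_nonneg)
  also have "\<dots> < \<infinity>" by simp
  finally have fin: "(\<integral>\<^sup>+ x. ennreal (norm (indicator {1..} x *\<^sub>R f2 x)) \<partial>lborel) < \<infinity>" .
  have integ: "set_integrable lborel {1..} (\<lambda>t. (h t * t) powr (-1/4))"
    unfolding set_integrable_def f2_def[symmetric] by (rule integrableI_bounded[OF meas fin])
  show ?thesis
    using smooth hpos hle hmono hdouble integ by (intro exI[of _ h]) auto
qed

theorem lemma5:
  fixes \<mu> :: real
  assumes "\<mu> > 1"
  shows "\<exists>\<beta> :: real \<Rightarrow> real. (\<forall>\<alpha>>0. \<beta> \<alpha> > 0) \<and>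
    (\<forall>H :: real \<Rightarrow> real.
       H \<in> borel_measurable (restrict_space lborel {0<..}) \<longrightarrow>
       (\<forall>t>0. H t > 0) \<longrightarrow>
       (\<forall>t>0. eta \<mu> H t > 0) \<longrightarrow>
       set_integrable lborel {1..} (\<lambda>t. (eta \<mu> H t * t) powr (-1/4)) \<longrightarrow>
       (\<exists>h :: real \<Rightarrow> real.
          smooth_on {0<..} h \<and>
          (\<forall>t>0. h t > 0) \<and>
          (\<forall>t>0. h t \<le> H t) \<and>
          (\<forall>t1 t2. 0 < t1 \<and> t1 \<le> t2 \<longrightarrow> h t1 \<le> h t2) \<and>
          (\<forall>\<alpha>>0. \<forall>t\<ge>2. h (\<alpha> * t) \<le> \<beta> \<alpha> * h t) \<and>
          set_integrable lborel {1..} (\<lambda>t. (h t * t) powr (-1/4))))"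
proof -
  define \<beta> where "\<beta> = (\<lambda>\<alpha>::real. exp 2 * max 1 (\<alpha>^6))"
  have A: "\<forall>\<alpha>>0. \<beta> \<alpha> > 0"
  proof (intro allI impI)
    fix \<alpha> :: real
    have "0 < max 1 (\<alpha>^6)" by (simp add: less_max_iff_disj)
    then show "\<beta> \<alpha> > 0" by (simp add: \<beta>_def)
  qed
  have B: "\<forall>H :: real \<Rightarrow> real.
       H \<in> borel_measurable (restrict_space lborel {0<..}) \<longrightarrow>
       (\<forall>t>0. H t > 0) \<longrightarrow>
       (\<forall>t>0. eta \<mu> H t > 0) \<longrightarrow>
       set_integrable lborel {1..} (\<lambda>t. (eta \<mu> H t * t) powr (-1/4)) \<longrightarrow>
       (\<exists>h :: real \<Rightarrow> real.
          smooth_on {0<..} h \<and>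
          (\<forall>t>0. h t > 0) \<and>
          (\<forall>t>0. h t \<le> H t) \<and>
          (\<forall>t1 t2. 0 < t1 \<and> t1 \<le> t2 \<longrightarrow> h t1 \<le> h t2) \<and>
          (\<forall>\<alpha>>0. \<forall>t\<ge>2. h (\<alpha> * t) \<le> \<beta> \<alpha> * h t) \<and>
          set_integrable lborel {1..} (\<lambda>t. (h t * t) powr (-1/4)))"
  proof (intro allI impI)
    fix H :: "real \<Rightarrow> real"
    assume "H \<in> borel_measurable (restrict_space lborel {0<..})" and h1: "\<forall>t>0. H t > 0"
      and h2: "\<forall>t>0. eta \<mu> H t > 0"
      and h3: "set_integrable lborel {1..} (\<lambda>t. (eta \<mu> H t * t) powr (-1/4))"
    show "\<exists>h :: real \<Rightarrow> real.
          smooth_on {0<..} h \<and>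
          (\<forall>t>0. h t > 0) \<and>
          (\<forall>t>0. h t \<le> H t) \<and>
          (\<forall>t1 t2. 0 < t1 \<and> t1 \<le> t2 \<longrightarrow> h t1 \<le> h t2) \<and>
          (\<forall>\<alpha>>0. \<forall>t\<ge>2. h (\<alpha> * t) \<le> \<beta> \<alpha> * h t) \<and>
          set_integrable lborel {1..} (\<lambda>t. (h t * t) powr (-1/4))"
      using main_H[OF assms h1 h2 h3] unfolding \<beta>_def by simp
  qed
  show ?thesis using A B by blast
qed

end
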